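(* Let $n\geq 3$, $q\geq 1$ with $\gcd(q,n-1)=1$, $k=-n+\frac{n-1}{q}$, $\beta_0=q\delta-\theta$, and let $\sigma:(\widehat W,S)\to(\widehat W(k\Lambda_0),S(k\Lambda_0))$ be the Coxeter isomorphism with $\sigma(s_{\alpha_0})=s_{\beta_0}$ and $\sigma(s_{\alpha_i})=s_{\alpha_i}$ for $1\leq i\leq n-1$. Then for every $\gamma$ in the root lattice $Q$ of $sl_n$, $\sigma(t_\gamma)=t_{q\gamma}$.
   Context: Affine $\widehat{sl}_n$ with simple roots $\alpha_0=\delta-\theta,\alpha_1,\dots,\alpha_{n-1}$, invariant form $(\cdot|\cdot)$, reflections $s_\alpha$; $\widehat W$ the affine Weyl group, $S=\{s_{\alpha_i}\}$; $\widehat W(k\Lambda_0)$ is the group generated by reflections in real roots $\alpha$ with $(k\Lambda_0+\widehat\rho|\alpha^\vee)\in\mathbb Z$, with simple reflections $S(k\Lambda_0)=\{s_{\beta_0},s_{\alpha_1},\dots,s_{\alpha_{n-1}}\}$. For $\gamma\in\mathfrak h^*$, $t_\gamma$ is the linear map $t_\gamma(\lambda)=\lambda+(\lambda|\delta)\gamma-\big((\lambda|\gamma)+\frac12(\lambda|\delta)(\gamma|\gamma)\big)\delta$ on $\widehat{\mathfrak h}^*$; for $\gamma\in Q$ one has $t_\gamma\in\widehat W$ and $t_{q\gamma}\in\widehat W(k\Lambda_0)$. *)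

theory Defs
  imports Main Complex_Main
begin

text \<open>Concrete model of the dual Cartan subalgebra of affine sl_n.
  An element is a triple (v, a, b) standing for  v + a Lambda_0 + b delta,
  where v :: nat => real is the finite part; the Cartan dual of sl_n is the set of v
  with v i = 0 for i >= n and sum of v i over i < n equal to 0 (coordinates 0-based,
  e_i - e_j realisation of the roots). Linear maps are taken on the whole type; all maps
  considered act trivially on the complement of hhat n, so nothing is lost.\<close>

type_synonym hs = "(nat \<Rightarrow> real) \<times> real \<times> real"

definition hhat :: "nat \<Rightarrow> hs set" where
  "hhat n = {(v, a, b). (\<forall>i\<ge>n. v i = 0) \<and> (\<Sum>i<n. v i) = 0}"

definition hadd :: "hs \<Rightarrow> hs \<Rightarrow> hs" where
  "hadd x y = (\<lambda>i. fst x i + fst y i, fst (snd x) + fst (snd y), snd (snd x) + snd (snd y))"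

definition hscale :: "real \<Rightarrow> hs \<Rightarrow> hs" where
  "hscale c x = (\<lambda>i. c * fst x i, c * fst (snd x), c * snd (snd x))"

definition hsub :: "hs \<Rightarrow> hs \<Rightarrow> hs" where
  "hsub x y = hadd x (hscale (-1) y)"

definition form :: "nat \<Rightarrow> hs \<Rightarrow> hs \<Rightarrow> real" where
  "form n x y = (\<Sum>i<n. fst x i * fst y i) + fst (snd x) * snd (snd y) + snd (snd x) * fst (snd y)"

definition delta :: hs where "delta = (\<lambda>_. 0, 0, 1)"
definition Lambda0 :: hs where "Lambda0 = (\<lambda>_. 0, 1, 0)"

definition fin :: "(nat \<Rightarrow> real) \<Rightarrow> hs" where "fin v = (v, 0, 0)"

definition ee :: "nat \<Rightarrow> nat \<Rightarrow> real" where "ee i = (\<lambda>j. if j = i then 1 else 0)"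

definition froot :: "nat \<Rightarrow> nat \<Rightarrow> hs" where
  "froot i j = fin (\<lambda>l. ee i l - ee j l)"

definition alpha :: "nat \<Rightarrow> hs" where "alpha i = froot (i - 1) i"

definition theta :: "nat \<Rightarrow> hs" where "theta n = froot 0 (n - 1)"

definition alpha0 :: "nat \<Rightarrow> hs" where "alpha0 n = hsub delta (theta n)"

definition beta0 :: "nat \<Rightarrow> nat \<Rightarrow> hs" where
  "beta0 n q = hsub (hscale (real q) delta) (theta n)"

definition copair :: "nat \<Rightarrow> hs \<Rightarrow> hs \<Rightarrow> real" where
  "copair n l a = 2 * form n l a / form n a a"

definition refl :: "nat \<Rightarrow> hs \<Rightarrow> hs \<Rightarrow> hs" where
  "refl n a l = hsub l (hscale (copair n l a) a)"

definition real_roots :: "nat \<Rightarrow> hs set" where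
  "real_roots n = {hadd (froot i j) (hscale (of_int m) delta) | i j m. i < n \<and> j < n \<and> i \<noteq> j}"

text \<open>rho = half the sum of positive roots of sl_n; rho_hat = rho + h^vee Lambda_0, h^vee = n.\<close>
definition rho :: "nat \<Rightarrow> hs" where
  "rho n = fin (\<lambda>l. (1/2) * (\<Sum>i<n. \<Sum>j<n. if i < j then ee i l - ee j l else 0))"

definition rho_hat :: "nat \<Rightarrow> hs" where
  "rho_hat n = hadd (rho n) (hscale (real n) Lambda0)"

text \<open>Group generated by a set of maps (all generators used are involutions, so the
  monoid generated under composition is the generated group).\<close>
inductive_set gen_group :: "(hs \<Rightarrow> hs) set \<Rightarrow> (hs \<Rightarrow> hs) set" for S where
  gen_id: "id \<in> gen_group S"
| gen_step: "f \<in> gen_group S \<Longrightarrow> s \<in> S \<Longrightarrow> s \<circ> f \<in> gen_group S"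

definition S_aff :: "nat \<Rightarrow> (hs \<Rightarrow> hs) set" where
  "S_aff n = {refl n (alpha0 n)} \<union> {refl n (alpha i) | i. 1 \<le> i \<and> i \<le> n - 1}"

definition W_aff :: "nat \<Rightarrow> (hs \<Rightarrow> hs) set" where
  "W_aff n = gen_group (S_aff n)"

definition W_k :: "nat \<Rightarrow> real \<Rightarrow> (hs \<Rightarrow> hs) set" where
  "W_k n k = gen_group {refl n a | a. a \<in> real_roots n \<and>
        copair n (hadd (hscale k Lambda0) (rho_hat n)) a \<in> \<int>}"

definition root_lattice :: "nat \<Rightarrow> hs set" where
  "root_lattice n = {fin (\<lambda>l. \<Sum>i\<in>{1..n-1}. of_int (c i) * fst (alpha i) l) | c :: nat \<Rightarrow> int. True}"

definition transl :: "nat \<Rightarrow> hs \<Rightarrow> hs \<Rightarrow> hs" where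
  "transl n g l = hsub (hadd l (hscale (form n l delta) g))
      (hscale (form n l g + (1/2) * form n l delta * form n g g) delta)"

end

theory Submission
  imports Defs
begin


lemma hs_eqI: "(\<And>i. fst x i = fst y i) \<Longrightarrow> fst (snd x) = fst (snd y) \<Longrightarrow> snd (snd x) = snd (snd y) \<Longrightarrow> x = y"
  by (cases x; cases y) auto

lemma form_add_l: "form n (hadd x y) z = form n x z + form n y z"
  by (simp add: form_def hadd_def sum.distrib algebra_simps)
lemma form_add_r: "form n z (hadd x y) = form n z x + form n z y"
  by (simp add: form_def hadd_def sum.distrib algebra_simps)
lemma form_scale_l: "form n (hscale c x) z = c * form n x z"
  by (simp add: form_def hscale_def sum_distrib_left algebra_simps)
lemma form_scale_r: "form n z (hscale c x) = c * form n z x"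
  by (simp add: form_def hscale_def sum_distrib_left algebra_simps)
lemma form_sub_l: "form n (hsub x y) z = form n x z - form n y z"
  by (simp add: hsub_def form_add_l form_scale_l)
lemma form_sub_r: "form n z (hsub x y) = form n z x - form n z y"
  by (simp add: hsub_def form_add_r form_scale_r)
lemma form_sym: "form n x y = form n y x"
  by (simp add: form_def algebra_simps)

lemmas form_lin = form_add_l form_add_r form_scale_l form_scale_r form_sub_l form_sub_r

lemma form_delta_delta[simp]: "form n delta delta = 0"
  by (simp add: form_def delta_def)
lemma form_fin_delta[simp]: "form n (fin v) delta = 0" "form n delta (fin v) = 0"
  by (simp_all add: form_def delta_def fin_def)

definition lin :: "(hs \<Rightarrow> hs) \<Rightarrow> bool" where
  "lin f \<longleftrightarrow> (\<forall>x y. f (hadd x y) = hadd (f x) (f y)) \<and> (\<forall>c x. f (hscale c x) = hscale c (f x))"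
definition iso :: "nat \<Rightarrow> (hs \<Rightarrow> hs) \<Rightarrow> bool" where
  "iso n f \<longleftrightarrow> (\<forall>x y. form n (f x) (f y) = form n x y)"

lemma lin_add: "lin f \<Longrightarrow> f (hadd x y) = hadd (f x) (f y)"
  unfolding lin_def by blast
lemma lin_scale: "lin f \<Longrightarrow> f (hscale c x) = hscale c (f x)"
  unfolding lin_def by blast
lemma lin_sub: "lin f \<Longrightarrow> f (hsub x y) = hsub (f x) (f y)"
  by (simp add: hsub_def lin_add lin_scale)

lemma conj_refl:
  assumes "lin P" "iso n P" "\<And>x. P (Q x) = x"
  shows "P (refl n a (Q l)) = refl n (P a) l"
proof -
  have "copair n (Q l) a = copair n l (P a)"
    using assms(2,3) unfolding copair_def iso_def by metis
  then show ?thesis using assms unfolding refl_def by (simp add: lin_sub lin_add lin_scale)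
qed

lemma conj_transl:
  assumes "lin P" "iso n P" "\<And>x. P (Q x) = x" "P delta = hscale c delta"
  shows "P (transl n g (Q l)) = transl n (hscale c (P g)) l"
proof -
  have i1: "form n (P (Q l)) (P delta) = form n (Q l) delta"
    using assms(2) unfolding iso_def by blast
  have 1: "form n (Q l) delta = c * form n l delta"
    using i1 unfolding assms(3,4) form_scale_r by simp
  have i2: "form n (P (Q l)) (P g) = form n (Q l) g"
    using assms(2) unfolding iso_def by blast
  have 2: "form n (Q l) g = form n l (P g)"
    using i2 unfolding assms(3) by simp
  have 3: "form n g g = form n (P g) (P g)"
    using assms(2) unfolding iso_def by metis
  have "P (transl n g (Q l)) = hsub (hadd l (hscale (c * form n l delta) (P g)))
      (hscale (form n l (P g) + 1/2 * (c * form n l delta) * form n (P g) (P g)) (hscale c delta))"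
    unfolding transl_def lin_sub[OF assms(1)] lin_add[OF assms(1)] lin_scale[OF assms(1)] assms(3,4) 1 2 3 ..
  also have "\<dots> = transl n (hscale c (P g)) l"
    unfolding transl_def form_scale_r form_scale_l
    by (rule hs_eqI) (simp_all add: hsub_def hadd_def hscale_def algebra_simps)
  finally show ?thesis .
qed

lemma copair_add: "copair n (hadd x y) a = copair n x a + copair n y a"
  unfolding copair_def by (simp add: form_lin add_divide_distrib)
lemma copair_scale: "copair n (hscale c x) a = c * copair n x a"
  unfolding copair_def by (simp add: form_lin)
lemma copair_self: "form n a a \<noteq> 0 \<Longrightarrow> copair n a a = 2"
  unfolding copair_def by simp
lemma copair_sub: "copair n (hsub x y) a = copair n x a - copair n y a"
  by (simp add: hsub_def copair_add copair_scale)

lemma refl_lin: "lin (refl n a)"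
  unfolding lin_def refl_def copair_add copair_scale
  by (auto intro!: hs_eqI simp: hsub_def hadd_def hscale_def algebra_simps)

lemma refl_iso: assumes "form n a a \<noteq> 0" shows "iso n (refl n a)"
  unfolding iso_def
proof (intro allI)
  fix x y
  have e: "form n (refl n a x) (refl n a y) = form n x y - copair n y a * form n x a
     - copair n x a * form n a y + copair n x a * (copair n y a * form n a a)"
    unfolding refl_def by (simp add: form_lin algebra_simps)
  have "form n a y = form n y a" by (rule form_sym)
  then show "form n (refl n a x) (refl n a y) = form n x y"
    unfolding e copair_def using assms by (simp add: field_simps)
qed

lemma refl_invol: assumes "form n a a \<noteq> 0" shows "refl n a (refl n a x) = x"
proof -
  have "copair n (refl n a x) a = - copair n x a"
    unfolding refl_def copair_sub copair_scale copair_self[OF assms] by simp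
  then show ?thesis unfolding refl_def[of n a "refl n a x"]
    by (auto intro!: hs_eqI simp: refl_def hsub_def hadd_def hscale_def)
qed

lemma refl_delta: assumes "form n delta a = 0" shows "refl n a delta = delta"
  unfolding refl_def copair_def using assms
  by (auto intro!: hs_eqI simp: hsub_def hadd_def hscale_def)



lemma sum_ee: "a < n \<Longrightarrow> (\<Sum>i<n. ee a i * f i) = f (a::nat)"
proof -
  assume "a < n"
  have "(\<Sum>i<n. ee a i * f i) = (\<Sum>i<n. if i = a then f a else 0)"
    by (rule sum.cong) (auto simp: ee_def)
  then show ?thesis using \<open>a < n\<close> by simp
qed

lemma form_froot: "a < n \<Longrightarrow> b < n \<Longrightarrow> form n (froot a b) x = fst x a - fst x b"
  by (simp add: form_def froot_def fin_def left_diff_distrib sum_subtractf sum_ee)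

lemma fst_froot: "fst (froot a b) i = ee a i - ee b i" "fst (snd (froot a b)) = 0" "snd (snd (froot a b)) = 0"
  by (simp_all add: froot_def fin_def)

lemma froot_norm: "a < n \<Longrightarrow> b < n \<Longrightarrow> a \<noteq> b \<Longrightarrow> form n (froot a b) (froot a b) = 2"
  by (simp add: form_froot fst_froot ee_def)

lemma refl_froot: assumes "a < n" "b < n" "c < n" "d < n" "c \<noteq> d"
  shows "refl n (froot c d) (froot a b) = hsub (froot a b) (hscale ((ee a c - ee b c) - (ee a d - ee b d)) (froot c d))"
proof -
  have "copair n (froot a b) (froot c d) = (ee a c - ee b c) - (ee a d - ee b d)"
    unfolding copair_def using assms by (simp add: froot_norm form_sym[of n "froot a b"] form_froot fst_froot) (simp add: ee_def)
  then show ?thesis by (simp add: refl_def)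
qed

lemma step_down: assumes "2 \<le> j" "j < n"
  shows "refl n (alpha j) (froot 0 j) = froot 0 (j - 1)"
  unfolding alpha_def using assms
  by (subst refl_froot) (auto intro!: hs_eqI simp: fst_froot hsub_def hadd_def hscale_def ee_def)

lemma step_up: assumes "m + 1 < i" "i < n"
  shows "refl n (alpha (m+1)) (froot m i) = froot (m+1) i"
  unfolding alpha_def using assms
  by (subst refl_froot) (auto intro!: hs_eqI simp: fst_froot hsub_def hadd_def hscale_def ee_def)

lemma step_refl: assumes "2 \<le> j" "j < n"
  shows "refl n (alpha j) (froot 0 (j - 1)) = froot 0 j"
  unfolding alpha_def using assms
  by (subst refl_froot) (auto intro!: hs_eqI simp: fst_froot hsub_def hadd_def hscale_def ee_def)

lemma transl_comp:
  assumes "form n g delta = 0" "form n h delta = 0"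
  shows "transl n g (transl n h l) = transl n (hadd g h) l"
proof -
  have 1: "form n (transl n h l) delta = form n l delta"
    unfolding transl_def using assms by (simp add: form_lin form_sym[of n delta])
  have 2: "form n (transl n h l) g = form n l g + form n l delta * form n h g"
    unfolding transl_def using assms by (simp add: form_lin form_sym[of n delta])
  have 3: "form n (hadd g h) (hadd g h) = form n g g + 2 * form n g h + form n h h"
    by (simp add: form_lin form_sym[of n h g])
  show ?thesis
    unfolding transl_def[of n g] 1 2 unfolding transl_def unfolding 3 unfolding form_add_r
    by (rule hs_eqI) (simp_all add: form_lin form_sym[of n h g] hsub_def hadd_def hscale_def algebra_simps)
qed

lemma transl_zero: "transl n (fin (\<lambda>_. 0)) = id"
  by (auto intro!: hs_eqI simp: transl_def form_def fin_def hsub_def hadd_def hscale_def)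

lemma gen_comp: "f \<in> gen_group S \<Longrightarrow> g \<in> gen_group S \<Longrightarrow> f \<circ> g \<in> gen_group S"
  by (induction f rule: gen_group.induct) (auto simp: comp_assoc intro: gen_group.intros)

lemma gen_gen: "s \<in> S \<Longrightarrow> s \<in> gen_group S"
  using gen_group.gen_step[OF gen_group.gen_id] by fastforce

lemma gen_inv: assumes "\<And>s. s \<in> S \<Longrightarrow> s \<circ> s = id"
  shows "f \<in> gen_group S \<Longrightarrow> \<exists>g \<in> gen_group S. g \<circ> f = id"
proof (induction f rule: gen_group.induct)
  case gen_id then show ?case by (metis comp_id gen_group.gen_id)
next
  case (gen_step f s)
  obtain g where g: "g \<in> gen_group S" "g \<circ> f = id" using gen_step.IH by blast
  have "g \<circ> s \<in> gen_group S" by (rule gen_comp[OF g(1) gen_gen[OF gen_step(2)]])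
  moreover have "(g \<circ> s) \<circ> (s \<circ> f) = id"
    using assms[OF gen_step(2)] g(2) by (metis comp_assoc comp_id)
  ultimately show ?case by blast
qed



lemma theta_fin: "theta n = fin (\<lambda>l. ee 0 l - ee (n-1) l)" by (simp add: theta_def froot_def)
lemma alpha_froot: "alpha i = froot (i-1) i" by (simp add: alpha_def)

lemma norm_theta: "n \<ge> 2 \<Longrightarrow> form n (theta n) (theta n) = 2"
  unfolding theta_def by (rule froot_norm) auto
lemma norm_alpha: "1 \<le> i \<Longrightarrow> i < n \<Longrightarrow> form n (alpha i) (alpha i) = 2"
  unfolding alpha_def by (rule froot_norm) auto
lemma delta_froot[simp]: "form n (froot a b) delta = 0" "form n delta (froot a b) = 0"
  by (simp_all add: froot_def)
lemma norm_alpha0: "n \<ge> 2 \<Longrightarrow> form n (alpha0 n) (alpha0 n) = 2"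
  unfolding alpha0_def using norm_theta[of n]
  by (simp add: form_lin theta_def form_sym[of n delta])
lemma delta_alpha0: "form n delta (alpha0 n) = 0"
  unfolding alpha0_def by (simp add: form_lin theta_def)

lemma transl_as_refl:
  assumes "form n a a = 2" "form n a delta = 0"
  shows "refl n (hsub delta a) (refl n a l) = transl n a l"
proof -
  have da: "form n delta a = 0" using assms(2) form_sym by metis
  have c1: "copair n l a = form n l a" unfolding copair_def using assms by simp
  have n2: "form n (hsub delta a) (hsub delta a) = 2"
    using assms da by (simp add: form_lin)
  have c2: "copair n (refl n a l) (hsub delta a) = form n l delta + form n l a"
    unfolding copair_def n2 refl_def c1 using assms da by (simp add: form_lin)
  show ?thesis unfolding refl_def[of n "hsub delta a"] c2 unfolding refl_def c1 transl_def assms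
    by (rule hs_eqI) (simp_all add: hsub_def hadd_def hscale_def delta_def algebra_simps)
qed

lemma refl_conj_fun:
  assumes "form n b b \<noteq> 0"
  shows "refl n b \<circ> refl n a \<circ> refl n b = refl n (refl n b a)"
proof (rule ext)
  fix l
  have "refl n b (refl n a (refl n b l)) = refl n (refl n b a) l"
    by (rule conj_refl[OF refl_lin refl_iso[OF assms]]) (rule refl_invol[OF assms])
  then show "(refl n b \<circ> refl n a \<circ> refl n b) l = refl n (refl n b a) l" by simp
qed

lemma transl_conj_fun:
  assumes "form n b b \<noteq> 0" "form n delta b = 0"
  shows "refl n b \<circ> transl n g \<circ> refl n b = transl n (refl n b g)"
proof -
  have "refl n b delta = hscale 1 delta" using refl_delta[OF assms(2)]
    by (simp add: hscale_def)
  moreover have "hscale 1 x = x" for x by (simp add: hscale_def)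
  ultimately have e: "refl n b delta = hscale 1 delta" "refl n b g = hscale 1 (refl n b g)" by simp_all
  show ?thesis
  proof (rule ext)
    fix l
    have "refl n b (transl n g (refl n b l)) = transl n (hscale 1 (refl n b g)) l"
      by (rule conj_transl[OF refl_lin refl_iso[OF assms(1)]]) (rule refl_invol[OF assms(1)], rule e(1))
    then show "(refl n b \<circ> transl n g \<circ> refl n b) l = transl n (refl n b g) l" using e(2) by simp
  qed
qed

locale setting =
  fixes n :: nat
  assumes n3: "n \<ge> 3"
begin

abbreviation "W \<equiv> W_aff n"

lemma si_W: "1 \<le> i \<Longrightarrow> i \<le> n - 1 \<Longrightarrow> refl n (alpha i) \<in> W"
  unfolding W_aff_def by (rule gen_gen) (auto simp: S_aff_def)
lemma s0_W: "refl n (alpha0 n) \<in> W"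
  unfolding W_aff_def by (rule gen_gen) (auto simp: S_aff_def)

lemma S_invol: assumes "s \<in> S_aff n" shows "s \<circ> s = id"
proof -
  have "\<exists>r. s = refl n r \<and> form n r r \<noteq> 0"
  proof -
    from assms have "s = refl n (alpha0 n) \<or> (\<exists>i. 1\<le>i \<and> i\<le>n-1 \<and> s = refl n (alpha i))"
      by (auto simp: S_aff_def)
    then show ?thesis
    proof (elim disjE exE conjE)
      assume "s = refl n (alpha0 n)" then show ?thesis using norm_alpha0[of n] n3 by (intro exI[of _ "alpha0 n"]) simp
    next
      fix i assume "1\<le>i" "i\<le>n-1" "s = refl n (alpha i)"
      then show ?thesis using norm_alpha[of i n] n3 by (intro exI[of _ "alpha i"]) simp
    qed
  qed
  then obtain r where r: "s = refl n r" "form n r r \<noteq> 0" by blast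
  show ?thesis
  proof (rule ext)
    fix l show "(s \<circ> s) l = id l" using refl_invol[OF r(2)] r(1) by simp
  qed
qed

lemma W_comp: "f \<in> W \<Longrightarrow> g \<in> W \<Longrightarrow> f \<circ> g \<in> W"
  unfolding W_aff_def by (rule gen_comp)

lemma refl_theta_W: "1 \<le> j \<Longrightarrow> j \<le> n - 1 \<Longrightarrow> refl n (froot 0 j) \<in> W"
proof (induction j)
  case 0 then show ?case by simp
next
  case (Suc j)
  show ?case
  proof (cases "j = 0")
    case True then show ?thesis using si_W[of 1] n3 by (simp add: alpha_def)
  next
    case False
    have "refl n (alpha (Suc j)) \<circ> refl n (froot 0 j) \<circ> refl n (alpha (Suc j)) \<in> W"
      using Suc False si_W[of "Suc j"] by (intro W_comp) auto
    also have "refl n (alpha (Suc j)) \<circ> refl n (froot 0 j) \<circ> refl n (alpha (Suc j))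
       = refl n (froot 0 (Suc j))"
      using refl_conj_fun[of n "alpha (Suc j)" "froot 0 j"] norm_alpha[of "Suc j" n] Suc False n3
        step_refl[of "Suc j" n] by auto
    finally show ?thesis .
  qed
qed

definition T where "T = {g. form n g delta = 0 \<and> transl n g \<in> W}"

lemma theta_T: "theta n \<in> T"
proof -
  have "transl n (theta n) = refl n (alpha0 n) \<circ> refl n (theta n)"
    using transl_as_refl[of n "theta n"] norm_theta[of n] n3
    by (auto simp: fun_eq_iff alpha0_def theta_def)
  moreover have "refl n (theta n) \<in> W" using refl_theta_W[of "n-1"] n3 by (simp add: theta_def)
  ultimately show ?thesis unfolding T_def using s0_W W_comp by (simp add: theta_def)
qed

lemma T_conj: assumes "g \<in> T" "1 \<le> i" "i \<le> n - 1" shows "refl n (alpha i) g \<in> T"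
proof -
  have N: "form n (alpha i) (alpha i) \<noteq> 0" using norm_alpha[of i n] assms n3 by simp
  have D: "form n delta (alpha i) = 0" by (simp add: alpha_def)
  have "refl n (alpha i) \<circ> transl n g \<circ> refl n (alpha i) \<in> W"
    using assms si_W by (auto simp: T_def intro!: W_comp)
  then have 1: "transl n (refl n (alpha i) g) \<in> W" using transl_conj_fun[OF N D] by simp
  have "form n (refl n (alpha i) g) delta = form n (refl n (alpha i) g) (refl n (alpha i) delta)"
    using refl_delta[OF D] by simp
  also have "\<dots> = form n g delta" using refl_iso[OF N] unfolding iso_def by blast
  also have "\<dots> = 0" using assms(1) by (simp add: T_def)
  finally show ?thesis using 1 by (simp add: T_def)
qed

lemma T_add: "g \<in> T \<Longrightarrow> h \<in> T \<Longrightarrow> hadd g h \<in> T"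
proof -
  assume a: "g \<in> T" "h \<in> T"
  have "transl n (hadd g h) = transl n g \<circ> transl n h"
    using a transl_comp[of n g h] by (auto simp: T_def fun_eq_iff)
  then show ?thesis using a W_comp by (auto simp: T_def form_lin)
qed

lemma zero_T: "fin (\<lambda>_. 0) \<in> T"
  unfolding T_def using transl_zero[of n] gen_group.gen_id by (simp add: W_aff_def)

lemma T_neg: assumes "g \<in> T" shows "hscale (-1) g \<in> T"
proof -
  obtain h where h: "h \<in> W" "h \<circ> transl n g = id"
    using gen_inv[of "S_aff n" "transl n g"] S_invol assms by (auto simp: T_def W_aff_def)
  have z: "hadd g (hscale (-1) g) = fin (\<lambda>_. 0)"
    by (rule hs_eqI) (simp_all add: hadd_def hscale_def fin_def)
  have "transl n g \<circ> transl n (hscale (-1) g) = id"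
    using transl_comp[of n g "hscale (-1) g"] assms z transl_zero[of n]
    by (auto simp: T_def fun_eq_iff form_lin)
  then have "h = transl n (hscale (-1) g)" using h(2) by (metis comp_assoc comp_id id_comp)
  then show ?thesis using h assms by (simp add: T_def form_lin)
qed

lemma froot0_T: "1 \<le> j \<Longrightarrow> j \<le> n - 1 \<Longrightarrow> froot 0 j \<in> T"
proof -
  have "\<forall>j. 1 \<le> j \<and> j = n - 1 - d \<longrightarrow> froot 0 j \<in> T" for d
  proof (induction d)
    case 0 then show ?case using theta_T by (simp add: theta_def)
  next
    case (Suc d)
    show ?case
    proof (intro allI impI)
      fix j assume j: "1 \<le> j \<and> j = n - 1 - Suc d"
      have sj: "1 \<le> Suc j \<and> Suc j = n - 1 - d" using j by arith
      have "froot 0 (Suc j) \<in> T" using Suc.IH sj by blast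
      then have "refl n (alpha (Suc j)) (froot 0 (Suc j)) \<in> T" using j by (intro T_conj) auto
      then show "froot 0 j \<in> T" using step_down[of "Suc j" n] j by auto
    qed
  qed
  from this[of "n - 1 - j"] show "1 \<le> j \<Longrightarrow> j \<le> n - 1 \<Longrightarrow> froot 0 j \<in> T"
    by simp
qed

end


context setting begin

lemma froot_T: "m < i \<Longrightarrow> i \<le> n - 1 \<Longrightarrow> froot m i \<in> T"
proof (induction m)
  case 0 then show ?case using froot0_T by simp
next
  case (Suc m)
  have "refl n (alpha (m+1)) (froot m i) \<in> T" using Suc by (intro T_conj) auto
  then show ?case using step_up[of m i n] Suc n3 by simp
qed

lemma alpha_T: "1 \<le> i \<Longrightarrow> i \<le> n - 1 \<Longrightarrow> alpha i \<in> T"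
  unfolding alpha_def by (rule froot_T) auto

lemma nat_mult_T: "g \<in> T \<Longrightarrow> hscale (real m) g \<in> T"
proof (induction m)
  case 0
  have "hscale (real 0) g = fin (\<lambda>_. 0)" by (rule hs_eqI) (simp_all add: hscale_def fin_def)
  then show ?case using zero_T by simp
next
  case (Suc m)
  have "hscale (real (Suc m)) g = hadd g (hscale (real m) g)"
    by (rule hs_eqI) (simp_all add: hscale_def hadd_def algebra_simps)
  then show ?case using Suc T_add by simp
qed

lemma int_mult_T: assumes "g \<in> T" shows "hscale (of_int c) g \<in> T"
proof (cases "c \<ge> 0")
  case True
  then have "hscale (of_int c) g = hscale (real (nat c)) g" by simp
  then show ?thesis using nat_mult_T[OF assms] by simp
next
  case False
  then have "hscale (of_int c) g = hscale (-1) (hscale (real (nat (-c))) g)"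
    by (intro hs_eqI) (simp_all add: hscale_def)
  then show ?thesis using T_neg nat_mult_T[OF assms] by simp
qed

lemma sum_T: "finite A \<Longrightarrow> A \<subseteq> {1..n-1} \<Longrightarrow>
   fin (\<lambda>l. \<Sum>i\<in>A. of_int (c i) * fst (alpha i) l) \<in> T"
proof (induction A rule: finite_induct)
  case empty then show ?case using zero_T by simp
next
  case (insert i A)
  have "fin (\<lambda>l. \<Sum>j\<in>insert i A. of_int (c j) * fst (alpha j) l)
     = hadd (hscale (of_int (c i)) (alpha i)) (fin (\<lambda>l. \<Sum>j\<in>A. of_int (c j) * fst (alpha j) l))"
    using insert by (intro hs_eqI) (simp_all add: fin_def hadd_def hscale_def alpha_def fst_froot)
  moreover have "alpha i \<in> T" using insert by (intro alpha_T) auto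
  ultimately show ?case using insert int_mult_T T_add by simp
qed

lemma lattice_T: "g \<in> root_lattice n \<Longrightarrow> g \<in> T"
  unfolding root_lattice_def using sum_T by auto

end

definition PP :: "nat \<Rightarrow> hs \<Rightarrow> hs" where "PP q x = (fst x, fst (snd x) / real q, real q * snd (snd x))"
definition QQ :: "nat \<Rightarrow> hs \<Rightarrow> hs" where "QQ q x = (fst x, real q * fst (snd x), snd (snd x) / real q)"

lemma PP_lin: "lin (PP q)"
  unfolding lin_def PP_def by (auto simp: hadd_def hscale_def add_divide_distrib distrib_left)
lemma PP_iso: "q \<ge> 1 \<Longrightarrow> iso n (PP q)"
  unfolding iso_def PP_def form_def by auto
lemma PQ: "q \<ge> 1 \<Longrightarrow> PP q (QQ q x) = x"
  unfolding PP_def QQ_def by auto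
lemma QP: "q \<ge> 1 \<Longrightarrow> QQ q (PP q x) = x"
  unfolding PP_def QQ_def by auto
lemma PP_delta: "PP q delta = hscale (real q) delta"
  unfolding PP_def delta_def hscale_def by simp
lemma PP_fin: "PP q (fin v) = fin v"
  unfolding PP_def fin_def by simp
lemma PP_alpha: "PP q (alpha i) = alpha i"
  by (simp add: alpha_def froot_def PP_fin)
lemma PP_alpha0: "PP q (alpha0 n) = beta0 n q"
  unfolding alpha0_def beta0_def theta_def froot_def
  by (simp add: lin_sub[OF PP_lin] PP_fin PP_delta)

theorem mainTheorem7:
  fixes n q :: nat and k :: real and \<sigma> :: "(hs \<Rightarrow> hs) \<Rightarrow> (hs \<Rightarrow> hs)"
  assumes "n \<ge> 3" and "q \<ge> 1" and "gcd q (n - 1) = 1"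
    and "k = - real n + real (n - 1) / real q"
    and "bij_betw \<sigma> (W_aff n) (W_k n k)"
    and "\<forall>f \<in> W_aff n. \<forall>g \<in> W_aff n. \<sigma> (f \<circ> g) = \<sigma> f \<circ> \<sigma> g"
    and "\<sigma> (refl n (alpha0 n)) = refl n (beta0 n q)"
    and "\<forall>i. 1 \<le> i \<and> i \<le> n - 1 \<longrightarrow> \<sigma> (refl n (alpha i)) = refl n (alpha i)"
  shows "\<forall>\<gamma> \<in> root_lattice n. \<sigma> (transl n \<gamma>) = transl n (hscale (real q) \<gamma>)"
proof -
  interpret setting n using assms(1) by unfold_locales
  have cr: "PP q \<circ> refl n a \<circ> QQ q = refl n (PP q a)" for a
  proof (rule ext)
    fix l show "(PP q \<circ> refl n a \<circ> QQ q) l = refl n (PP q a) l"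
      using conj_refl[OF PP_lin PP_iso[OF assms(2)] PQ[OF assms(2)]] by simp
  qed
  have ct: "PP q \<circ> transl n g \<circ> QQ q = transl n (hscale (real q) (PP q g))" for g
  proof (rule ext)
    fix l show "(PP q \<circ> transl n g \<circ> QQ q) l = transl n (hscale (real q) (PP q g)) l"
      using conj_transl[OF PP_lin PP_iso[OF assms(2)] PQ[OF assms(2)] PP_delta] by simp
  qed
  have gens: "\<sigma> s = PP q \<circ> s \<circ> QQ q" if "s \<in> S_aff n" for s
  proof -
    from that have "s = refl n (alpha0 n) \<or> (\<exists>i. 1\<le>i \<and> i\<le>n-1 \<and> s = refl n (alpha i))"
      by (auto simp: S_aff_def)
    then show ?thesis
    proof (elim disjE exE conjE)
      assume "s = refl n (alpha0 n)" then show ?thesis using assms(7) cr PP_alpha0 by simp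
    next
      fix i assume "1\<le>i" "i\<le>n-1" "s = refl n (alpha i)"
      then show ?thesis using assms(8) cr PP_alpha by simp
    qed
  qed
  have s1: "refl n (alpha 1) \<in> W" using si_W[of 1] assms(1) by simp
  have s1S: "refl n (alpha 1) \<in> S_aff n" using assms(1) by (auto simp: S_aff_def)
  have sid: "\<sigma> id = id"
  proof -
    have "\<sigma> id = \<sigma> (refl n (alpha 1) \<circ> refl n (alpha 1))" using S_invol[OF s1S] by simp
    also have "\<dots> = \<sigma> (refl n (alpha 1)) \<circ> \<sigma> (refl n (alpha 1))" using assms(6) s1 by blast
    also have "\<dots> = refl n (alpha 1) \<circ> refl n (alpha 1)" using assms(8) assms(1) by simp
    also have "\<dots> = id" using S_invol[OF s1S] .
    finally show ?thesis .
  qed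
  have QPid: "QQ q \<circ> PP q = id" using QP[OF assms(2)] by (simp add: fun_eq_iff)
  have all: "\<sigma> w = PP q \<circ> w \<circ> QQ q" if "w \<in> W" for w
    using that unfolding W_aff_def
  proof (induction w rule: gen_group.induct)
    case gen_id
    have pid: "PP q \<circ> id \<circ> QQ q = id"
    proof (rule ext)
      fix x show "(PP q \<circ> id \<circ> QQ q) x = id x" using PQ[OF assms(2)] by simp
    qed
    show ?case by (simp only: sid pid)
  next
    case (gen_step f s)
    have "\<sigma> (s \<circ> f) = \<sigma> s \<circ> \<sigma> f"
      using assms(6) gen_step gen_gen[of s "S_aff n"] by (auto simp: W_aff_def)
    also have "\<dots> = (PP q \<circ> s \<circ> QQ q) \<circ> (PP q \<circ> f \<circ> QQ q)" using gens gen_step by (simp only:)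
    also have "\<dots> = PP q \<circ> (s \<circ> f) \<circ> QQ q" by (simp add: comp_def QP[OF assms(2)])
    finally show ?case .
  qed
  show ?thesis
  proof
    fix g assume g: "g \<in> root_lattice n"
    then have "transl n g \<in> W" using lattice_T by (simp add: T_def)
    then have "\<sigma> (transl n g) = transl n (hscale (real q) (PP q g))" using all ct by simp
    moreover have "PP q g = g" using g by (auto simp: root_lattice_def PP_fin)
    ultimately show "\<sigma> (transl n g) = transl n (hscale (real q) g)" by simp
  qed
qed

end
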